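(* Let $\mathcal G_n=\{x_{i,n}\}_{i=1,\ldots,d_n}$ be an asymptotically uniform grid in $[a,b]$ with $d_n\to\infty$, and let $\mathcal G_n'=\{x'_{i,n}\}_{i=1,\ldots,d'_n}$ be a sequence of $d_n'$ real points such that $\mathcal G_n'\subset[a-\epsilon_n,b+\epsilon_n]$ for some $\epsilon_n\to0$ and $|\mathcal G_n\triangle\mathcal G_n'|=o(d_n)$ as $n\to\infty$. Then $d_n'/d_n\to1$ as $n\to\infty$, and $\mathcal G_n'$, with its points rearranged in increasing order, is an asymptotically uniform grid in $[a,b]$.
   Context: A sequence of points $\{x_{i,n}\}_{i=1,\ldots,m_n}$ is an asymptotically uniform grid in $[a,b]$ if $\max_{i=1,\ldots,m_n}|x_{i,n}-(a+i(b-a)/m_n)|\to0$. The sequences of points $\mathcal G_n,\mathcal G_n'$ are regarded as finite multisets, and $\mathcal G_n\triangle\mathcal G_n'=(\mathcal G_n\setminus\mathcal G_n')\cup(\mathcal G_n'\setminus\mathcal G_n)$ is the multiset symmetric difference (counting multiplicities). *)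

theory Defs
  imports "HOL-Analysis.Analysis" "HOL-Library.Multiset" "HOL-Library.Landau_Symbols"
begin

definition asymp_uniform_grid ::
  "(nat \<Rightarrow> nat \<Rightarrow> real) \<Rightarrow> (nat \<Rightarrow> nat) \<Rightarrow> real \<Rightarrow> real \<Rightarrow> bool" where
  "asymp_uniform_grid x m a b \<longleftrightarrow>
     (\<forall>e>0. eventually (\<lambda>n. \<forall>i\<in>{1..m n}.
         \<bar>x n i - (a + real i * (b - a) / real (m n))\<bar> < e) sequentially)"

definition grid_mset :: "(nat \<Rightarrow> nat \<Rightarrow> real) \<Rightarrow> (nat \<Rightarrow> nat) \<Rightarrow> nat \<Rightarrow> real multiset" where
  "grid_mset x m n = image_mset (x n) (mset_set {1..m n})"

definition mset_symdiff :: "'a multiset \<Rightarrow> 'a multiset \<Rightarrow> 'a multiset" where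
  "mset_symdiff A B = (A - B) + (B - A)"

definition sorted_grid :: "(nat \<Rightarrow> nat \<Rightarrow> real) \<Rightarrow> (nat \<Rightarrow> nat) \<Rightarrow> nat \<Rightarrow> nat \<Rightarrow> real" where
  "sorted_grid x m n i = sort (map (x n) [1..<m n + 1]) ! (i - 1)"

end

theory Submission
  imports Defs
begin

lemma nat_floor_le: "0 \<le> c \<Longrightarrow> real (nat \<lfloor>c\<rfloor>) \<le> (c::real)"
  by (simp add: of_nat_nat)
lemma nat_floor_ge: "real (nat \<lfloor>c\<rfloor>) \<ge> (c::real) - 1"
proof (cases "0 \<le> c")
  case True thus ?thesis using real_of_int_floor_add_one_gt[of c] by (simp add: of_nat_nat)
next
  case False thus ?thesis by simp
qed
lemma nat_floor_max: "real (nat \<lfloor>c\<rfloor>) \<le> max 0 (c::real)"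
  by (cases "0 \<le> c") (auto simp: of_nat_nat)
lemma le_nat_floor: "real i \<le> (c::real) \<Longrightarrow> i \<le> nat \<lfloor>c\<rfloor>"
proof -
  assume "real i \<le> c"
  hence "int i \<le> \<lfloor>c\<rfloor>" by (simp add: le_floor_iff)
  thus ?thesis by simp
qed
lemma nat_floor_le_nat: "(c::real) < real m \<Longrightarrow> nat \<lfloor>c\<rfloor> \<le> m"
proof -
  assume "c < real m"
  hence "\<lfloor>c\<rfloor> < int m" by (simp add: floor_less_iff)
  thus ?thesis by simp
qed

lemma cnt_le:
  fixes A B :: "'a multiset"
  shows "size (filter_mset P A) \<le> size (filter_mset P B) + size (mset_symdiff A B)"
    and "size (filter_mset P B) \<le> size (filter_mset P A) + size (mset_symdiff A B)"
proof -
  have s1: "A \<subseteq># (A - B) + B" using subset_eq_diff_conv by blast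
  have "size (filter_mset P A) \<le> size (filter_mset P ((A - B) + B))"
    by (rule size_mset_mono, rule filter_mset_mono_strong[OF s1]) auto
  also have "\<dots> \<le> size (A - B) + size (filter_mset P B)"
    using size_filter_mset_lesseq[of P "A - B"] by simp
  finally show "size (filter_mset P A) \<le> size (filter_mset P B) + size (mset_symdiff A B)"
    by (simp add: mset_symdiff_def)
next
  have s1: "B \<subseteq># (B - A) + A" using subset_eq_diff_conv by blast
  have "size (filter_mset P B) \<le> size (filter_mset P ((B - A) + A))"
    by (rule size_mset_mono, rule filter_mset_mono_strong[OF s1]) auto
  also have "\<dots> \<le> size (B - A) + size (filter_mset P A)"
    using size_filter_mset_lesseq[of P "B - A"] by simp
  finally show "size (filter_mset P B) \<le> size (filter_mset P A) + size (mset_symdiff A B)"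
    by (simp add: mset_symdiff_def)
qed

lemma size_symdiff:
  fixes A B :: "'a multiset"
  shows "\<bar>real (size A) - real (size B)\<bar> \<le> real (size (mset_symdiff A B))"
proof -
  have "A - B = A - (A \<inter># B)" by simp
  hence 1: "size (A - B) = size A - size (A \<inter># B)"
    by (metis size_Diff_submset subset_mset.inf_le1)
  have "B - A = B - (A \<inter># B)" by (metis diff_intersect_right_idem)
  hence 2: "size (B - A) = size B - size (A \<inter># B)"
    by (metis size_Diff_submset subset_mset.inf_le2)
  have "size (A \<inter># B) \<le> size A" "size (A \<inter># B) \<le> size B"
    by (auto intro: size_mset_mono)
  thus ?thesis using 1 2 by (simp add: mset_symdiff_def)
qed

lemma grid_mset_list: "grid_mset x m n = mset (map (x n) [1..<m n + 1])"
proof -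
  have "{1..<m n + 1} = {1..m n}" by auto
  thus ?thesis by (simp only: grid_mset_def mset_map mset_upt)
qed

lemma grid_count: "size (filter_mset P (grid_mset x m n)) = card {i\<in>{1..m n}. P (x n i)}"
  unfolding grid_mset_def by (simp add: filter_mset_image_mset)

lemma sorted_count:
  "size (filter_mset P (grid_mset x m n)) = length (filter P (sort (map (x n) [1..<m n + 1])))"
proof -
  have "length (filter P (sort (map (x n) [1..<m n + 1]))) = size (mset (filter P (sort (map (x n) [1..<m n + 1]))))"
    by (simp only: size_mset)
  also have "\<dots> = size (filter_mset P (grid_mset x m n))"
    by (simp only: mset_filter mset_sort grid_mset_list)
  finally show ?thesis by simp
qed

lemma sorted_le_count:
  fixes ys :: "real list"
  assumes "sorted ys" "1 \<le> k" "k \<le> length ys" "k \<le> length (filter (\<lambda>y. y \<le> t) ys)"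
  shows "ys ! (k - 1) \<le> t"
proof (rule ccontr)
  assume nle: "\<not> ?thesis"
  have "{i. i < length ys \<and> ys ! i \<le> t} \<subseteq> {..<k-1}"
  proof
    fix i assume "i \<in> {i. i < length ys \<and> ys ! i \<le> t}"
    hence i: "i < length ys" "ys ! i \<le> t" by auto
    show "i \<in> {..<k-1}"
    proof (rule ccontr)
      assume "i \<notin> {..<k-1}" hence "k - 1 \<le> i" by simp
      hence "ys ! (k - 1) \<le> ys ! i" using sorted_nth_mono[OF assms(1)] i(1) by blast
      thus False using i(2) nle by simp
    qed
  qed
  hence "card {i. i < length ys \<and> ys ! i \<le> t} \<le> card {..<k-1}"
    by (rule card_mono[OF finite_lessThan])
  hence "card {i. i < length ys \<and> ys ! i \<le> t} \<le> k - 1" by simp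
  thus False using assms(2,4) by (simp add: length_filter_conv_card)
qed

lemma sorted_gt_count:
  fixes ys :: "real list"
  assumes "sorted ys" "1 \<le> k" "k \<le> length ys" "length (filter (\<lambda>y. y \<le> t) ys) < k"
  shows "t < ys ! (k - 1)"
proof (rule ccontr)
  assume nlt: "\<not> ?thesis"
  have "{..<k} \<subseteq> {i. i < length ys \<and> ys ! i \<le> t}"
  proof
    fix i assume "i \<in> {..<k}"
    hence i: "i < k" by simp
    hence il: "i < length ys" using assms(3) by simp
    have "ys ! i \<le> ys ! (k - 1)" using sorted_nth_mono[OF assms(1), of i "k - 1"] i assms(3) by simp
    thus "i \<in> {i. i < length ys \<and> ys ! i \<le> t}" using nlt il by simp
  qed
  moreover have "finite {i. i < length ys \<and> ys ! i \<le> t}" by simp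
  ultimately have "card {..<k} \<le> card {i. i < length ys \<and> ys ! i \<le> t}"
    by (intro card_mono)
  hence "k \<le> card {i. i < length ys \<and> ys ! i \<le> t}" by simp
  thus False using assms(4) by (simp add: length_filter_conv_card)
qed

lemma sorted_grid_mem:
  assumes "k \<in> {1..m n}"
  shows "\<exists>j\<in>{1..m n}. sorted_grid x m n k = x n j"
proof -
  let ?ys = "sort (map (x n) [1..<m n + 1])"
  have "length ?ys = m n" by simp
  hence "?ys ! (k - 1) \<in> set ?ys" using assms by (intro nth_mem) auto
  hence "?ys ! (k - 1) \<in> x n ` {1..m n}" by auto
  thus ?thesis unfolding sorted_grid_def by auto
qed

lemma core:
  fixes x x' :: "nat \<Rightarrow> nat \<Rightarrow> real" and d d' :: "nat \<Rightarrow> nat" and a b e eps :: real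
    and n k :: nat
  assumes ab: "a < b" and e: "e > 0"
    and grid: "\<forall>i\<in>{1..d n}. \<bar>x n i - (a + real i * (b - a) / real (d n))\<bar> < e/4"
    and eps: "\<bar>eps\<bar> < e/4"
    and pts: "\<And>i. i \<in> {1..d' n} \<Longrightarrow> x' n i \<in> {a - eps .. b + eps}"
    and D1: "real (size (mset_symdiff (grid_mset x d n) (grid_mset x' d' n))) \<le> e / (16*(b-a)) * real (d n)"
    and D2: "real (size (mset_symdiff (grid_mset x d n) (grid_mset x' d' n))) \<le> real (d n) / 2"
    and dn: "16*(b-a)/e \<le> real (d n)"
    and k: "k \<in> {1..d' n}"
  shows "\<bar>sorted_grid x' d' n k - (a + real k * (b - a) / real (d' n))\<bar> < e"
proof -
  define L where "L = b - a"
  have L: "L > 0" using ab L_def by simp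
  define D where "D = real (size (mset_symdiff (grid_mset x d n) (grid_mset x' d' n)))"
  define ys where "ys = sort (map (x' n) [1..<d' n + 1])"
  have len: "length ys = d' n" and srt: "sorted ys" by (simp_all add: ys_def)
  have ydef: "sorted_grid x' d' n k = ys ! (k - 1)" by (simp add: sorted_grid_def ys_def)
  obtain j where j: "j \<in> {1..d' n}" "sorted_grid x' d' n k = x' n j"
    using sorted_grid_mem[of k d' n x'] k by blast
  have ymem: "ys ! (k - 1) \<in> {a - eps .. b + eps}" using pts[OF j(1)] j(2) ydef by simp
  define N' where "N' t = length (filter (\<lambda>y. y \<le> t) ys)" for t
  define NG where "NG t = card {i\<in>{1..d n}. x n i \<le> t}" for t
  have N'eq: "N' t = size (filter_mset (\<lambda>y. y \<le> t) (grid_mset x' d' n))" for t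
    unfolding N'_def ys_def by (rule sorted_count[symmetric])
  have NGeq: "NG t = size (filter_mset (\<lambda>y. y \<le> t) (grid_mset x d n))" for t
    unfolding NG_def by (rule grid_count[symmetric])
  have cmp1: "real (NG t) \<le> real (N' t) + D" for t
    using cnt_le(1)[of "\<lambda>y. y \<le> t" "grid_mset x d n" "grid_mset x' d' n"]
    unfolding N'eq NGeq D_def by linarith
  have cmp2: "real (N' t) \<le> real (NG t) + D" for t
    using cnt_le(2)[where P="\<lambda>y. y \<le> t" and A="grid_mset x d n" and B="grid_mset x' d' n"]
    unfolding N'eq NGeq D_def by linarith
  have sz: "size (grid_mset x m n) = m n" for x m by (simp add: grid_mset_def)
  have dd: "\<bar>real (d' n) - real (d n)\<bar> \<le> D"
    using size_symdiff[of "grid_mset x d n" "grid_mset x' d' n"] unfolding D_def sz by linarith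
  define E where "E = real (d n) * e / (16 * L)"
  have DE: "D \<le> E" using D1 unfolding D_def E_def L_def by (simp add: mult.commute)
  have E1: "1 \<le> E"
  proof -
    have "16 * L / e * e \<le> real (d n) * e" using dn e L_def by (intro mult_right_mono) auto
    hence "16 * L \<le> real (d n) * e" using e by simp
    thus ?thesis unfolding E_def using L by simp
  qed
  have D0: "0 \<le> D" unfolding D_def by simp
  have dpos: "real (d n) > 0"
  proof (rule ccontr)
    assume "\<not> real (d n) > 0"
    hence "real (d n) = 0" by simp
    hence "E = 0" unfolding E_def by simp
    thus False using E1 by simp
  qed
  have D2': "D \<le> real (d n) / 2" using D2 D_def by simp
  have k1: "1 \<le> k" "k \<le> d' n" using k by auto
  hence d'pos: "real (d' n) > 0" by simp
  define q where "q = real k / real (d' n)"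
  have q0: "0 < q" "q \<le> 1" using k1 d'pos by (auto simp: q_def)
  have tq: "real k * (b - a) / real (d' n) = q * L" by (simp add: q_def L_def)
  have kq: "real k = q * real (d' n)" using d'pos by (simp add: q_def)
  have dq: "\<bar>real (d n) * q - real k\<bar> \<le> D"
  proof -
    have "real (d n) * q - real k = q * (real (d n) - real (d' n))" using kq by (simp add: algebra_simps)
    hence "\<bar>real (d n) * q - real k\<bar> = q * \<bar>real (d n) - real (d' n)\<bar>" using q0 by (simp add: abs_mult)
    also have "\<dots> \<le> 1 * \<bar>real (d n) - real (d' n)\<bar>" using q0 by (intro mult_right_mono) auto
    finally show ?thesis using dd by (simp add: abs_minus_commute)
  qed
  have gridL: "\<And>i. i \<in> {1..d n} \<Longrightarrow> \<bar>x n i - (a + real i * L / real (d n))\<bar> < e/4"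
    using grid L_def by auto
  have upper: "ys ! (k - 1) < a + q * L + e"
  proof (cases "b + eps < a + q * L + e")
    case True thus ?thesis using ymem by simp
  next
    case False
    hence lt: "q * L + e / 4 < L" using eps L_def by linarith
    define t where "t = a + q * L + e / 2"
    define c1 where "c1 = real (d n) * (q * L + e / 4) / L"
    have c1eq: "c1 = real (d n) * q + 4 * E" unfolding c1_def E_def using L by (simp add: field_simps)
    have c1lt: "c1 < real (d n)"
    proof -
      have "real (d n) * (q * L + e / 4) < real (d n) * L" using lt dpos by simp
      thus ?thesis unfolding c1_def using L by (simp add: divide_simps)
    qed
    have c10: "0 \<le> c1" unfolding c1_def using q0 L e by simp
    define m where "m = nat \<lfloor>c1\<rfloor>"
    have mle: "m \<le> d n" using nat_floor_le_nat[OF c1lt] unfolding m_def .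
    have mge: "real m \<ge> c1 - 1" unfolding m_def by (rule nat_floor_ge)
    have sub: "{1..m} \<subseteq> {i\<in>{1..d n}. x n i \<le> t}"
    proof
      fix i assume i: "i \<in> {1..m}"
      hence i1: "i \<in> {1..d n}" using mle by auto
      have "i \<le> nat \<lfloor>c1\<rfloor>" using i unfolding m_def by simp
      hence "real i \<le> real (nat \<lfloor>c1\<rfloor>)" by simp
      also have "\<dots> \<le> c1" using c10 by (rule nat_floor_le)
      finally have "real i \<le> c1" .
      hence "real i * L \<le> c1 * L" by (rule mult_right_mono) (use L in simp)
      hence "real i * L / real (d n) \<le> c1 * L / real (d n)" by (rule divide_right_mono) (use dpos in simp)
      also have "\<dots> = q * L + e / 4" unfolding c1_def using L dpos by simp
      finally have "real i * L / real (d n) \<le> q * L + e / 4" .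
      moreover have "x n i < a + real i * L / real (d n) + e/4" using gridL[OF i1] unfolding abs_less_iff by linarith
      ultimately have "x n i \<le> t" unfolding t_def by linarith
      thus "i \<in> {i\<in>{1..d n}. x n i \<le> t}" using i1 by auto
    qed
    hence "card {1..m} \<le> NG t" unfolding NG_def by (intro card_mono) auto
    hence "m \<le> NG t" by simp
    hence "real (N' t) \<ge> real k" using cmp1[of t] mge c1eq dq DE E1 by linarith
    hence "k \<le> length (filter (\<lambda>y. y \<le> t) ys)" unfolding N'_def by simp
    hence "ys ! (k - 1) \<le> t" using sorted_le_count[OF srt k1(1)] k1 len by simp
    thus ?thesis unfolding t_def using e by simp
  qed
  have lower: "a + q * L - e < ys ! (k - 1)"
  proof (cases "a + q * L - e < a - eps")
    case True thus ?thesis using ymem by simp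
  next
    case False
    hence qL: "q * L > 3 * e / 4" using eps by linarith
    define t where "t = a + q * L - e"
    define c2 where "c2 = real (d n) * (q * L - 3 * e / 4) / L"
    have c2eq: "c2 = real (d n) * q - 12 * E" unfolding c2_def E_def using L by (simp add: field_simps)
    have sub: "{i\<in>{1..d n}. x n i \<le> t} \<subseteq> {1..nat \<lfloor>c2\<rfloor>}"
    proof
      fix i assume i: "i \<in> {i\<in>{1..d n}. x n i \<le> t}"
      hence i1: "i \<in> {1..d n}" by auto
      have "x n i > a + real i * L / real (d n) - e/4" using gridL[OF i1] unfolding abs_less_iff by linarith
      hence "real i * L / real (d n) < q * L - 3 * e / 4" using i unfolding t_def by auto
      hence "real i * L / real (d n) * (real (d n) / L) < (q * L - 3 * e / 4) * (real (d n) / L)"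
        by (rule mult_strict_right_mono) (use L dpos in simp)
      hence "real i < c2" unfolding c2_def using L dpos by (simp add: field_simps)
      hence "i \<le> nat \<lfloor>c2\<rfloor>" by (intro le_nat_floor) simp
      thus "i \<in> {1..nat \<lfloor>c2\<rfloor>}" using i1 by simp
    qed
    hence "NG t \<le> card {1..nat \<lfloor>c2\<rfloor>}" unfolding NG_def by (intro card_mono) auto
    hence "NG t \<le> nat \<lfloor>c2\<rfloor>" by simp
    hence "real (NG t) \<le> real (nat \<lfloor>c2\<rfloor>)" by simp
    hence NGb: "real (NG t) \<le> max 0 c2" using nat_floor_max[of c2] by linarith
    have kD: "D < real k"
    proof -
      have "real (d' n) \<ge> real (d n) / 2" using dd D2' by linarith
      have qL0: "0 \<le> q * L" using q0 L by simp
      have "3 * e / 4 * (real (d n) / 2) \<le> q * L * (real (d n) / 2)"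
        by (rule mult_right_mono) (use qL dpos in simp_all)
      also have "\<dots> \<le> q * L * real (d' n)"
        using \<open>real (d' n) \<ge> real (d n) / 2\<close> qL0 by (rule mult_left_mono)
      also have "\<dots> = real k * L" using kq by simp
      finally have "real k * L \<ge> 3 * e / 4 * (real (d n) / 2)" .
      hence "real k \<ge> 6 * E" unfolding E_def using L by (simp add: field_simps)
      thus ?thesis using DE E1 by linarith
    qed
    have "real (N' t) < real k" using cmp2[of t] NGb c2eq dq DE E1 kD by linarith
    hence "length (filter (\<lambda>y. y \<le> t) ys) < k" unfolding N'_def by simp
    hence "t < ys ! (k - 1)" using sorted_gt_count[OF srt k1(1)] k1 len by simp
    thus ?thesis unfolding t_def .
  qed
  have "\<bar>ys ! (k - 1) - (a + q * L)\<bar> < e" unfolding abs_less_iff using upper lower by simp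
  thus ?thesis unfolding ydef tq .
qed

theorem lemma3p11:
  fixes x x' :: "nat \<Rightarrow> nat \<Rightarrow> real" and d d' :: "nat \<Rightarrow> nat" and a b :: real
    and \<epsilon> :: "nat \<Rightarrow> real"
  assumes "asymp_uniform_grid x d a b"
    and "filterlim d at_top sequentially"
    and "\<epsilon> \<longlonglongrightarrow> 0"
    and "\<And>n i. i \<in> {1..d' n} \<Longrightarrow> x' n i \<in> {a - \<epsilon> n .. b + \<epsilon> n}"
    and "(\<lambda>n. real (size (mset_symdiff (grid_mset x d n) (grid_mset x' d' n))))
           \<in> o(\<lambda>n. real (d n))"
  shows "((\<lambda>n. real (d' n) / real (d n)) \<longlonglongrightarrow> 1)
         \<and> asymp_uniform_grid (sorted_grid x' d') d' a b"
proof -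
  define Dn where "Dn = (\<lambda>n. real (size (mset_symdiff (grid_mset x d n) (grid_mset x' d' n))))"
  have sz: "size (grid_mset y m n) = m n" for y m n by (simp add: grid_mset_def)
  have dd: "\<bar>real (d' n) - real (d n)\<bar> \<le> Dn n" for n
    using size_symdiff[of "grid_mset x d n" "grid_mset x' d' n"] unfolding Dn_def sz
    by (simp add: abs_minus_commute)
  have Dn0: "0 \<le> Dn n" for n unfolding Dn_def by simp
  have o: "Dn \<in> o(\<lambda>n. real (d n))" using assms(5) unfolding Dn_def .
  have small: "eventually (\<lambda>n. Dn n \<le> c * real (d n)) sequentially" if c: "c > 0" for c
  proof -
    have "eventually (\<lambda>n. norm (Dn n) \<le> c * norm (real (d n))) sequentially"
      using landau_o.smallD[OF o c] .
    thus ?thesis by (rule eventually_mono) (simp add: Dn0 abs_of_nonneg)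
  qed
  have dtop: "eventually (\<lambda>n. Z \<le> real (d n)) sequentially" for Z
  proof -
    have "\<forall>Z. eventually (\<lambda>n. Z \<le> d n) sequentially"
      using assms(2) by (simp add: filterlim_at_top)
    hence "eventually (\<lambda>n. nat \<lceil>Z\<rceil> \<le> d n) sequentially" by (rule spec)
    thus ?thesis
    proof (rule eventually_mono)
      fix n assume "nat \<lceil>Z\<rceil> \<le> d n"
      hence "real (nat \<lceil>Z\<rceil>) \<le> real (d n)" by simp
      thus "Z \<le> real (d n)" using real_nat_ceiling_ge[of Z] by linarith
    qed
  qed
  have part1: "(\<lambda>n. real (d' n) / real (d n)) \<longlonglongrightarrow> 1"
    unfolding tendsto_iff
  proof (intro allI impI)
    fix r :: real assume r: "r > 0"
    have "eventually (\<lambda>n. Dn n \<le> r / 2 * real (d n)) sequentially" by (rule small) (use r in simp)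
    moreover have "eventually (\<lambda>n. 1 \<le> real (d n)) sequentially" by (rule dtop)
    ultimately show "eventually (\<lambda>n. dist (real (d' n) / real (d n)) 1 < r) sequentially"
    proof eventually_elim
      case (elim n)
      hence dp: "real (d n) > 0" by simp
      have "real (d' n) / real (d n) - 1 = (real (d' n) - real (d n)) / real (d n)"
        using dp by (simp add: field_simps)
      hence "dist (real (d' n) / real (d n)) 1 = \<bar>real (d' n) - real (d n)\<bar> / real (d n)"
        by (simp add: dist_real_def abs_divide)
      also have "\<dots> \<le> (r / 2 * real (d n)) / real (d n)"
        using dd[of n] elim(1) dp by (intro divide_right_mono) simp_all
      also have "\<dots> = r / 2" using dp by simp
      finally show ?case using r by simp
    qed
  qed
  have part2: "asymp_uniform_grid (sorted_grid x' d') d' a b"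
    unfolding asymp_uniform_grid_def
  proof (intro allI impI)
    fix e :: real assume e: "e > 0"
    have epsev: "eventually (\<lambda>n. \<bar>\<epsilon> n\<bar> < r) sequentially" if "r > 0" for r
      using tendstoD[OF assms(3) that] by (simp add: dist_real_def)
    consider "a < b" | "a = b" | "b < a" by linarith
    thus "eventually (\<lambda>n. \<forall>i\<in>{1..d' n}. \<bar>sorted_grid x' d' n i - (a + real i * (b - a) / real (d' n))\<bar> < e) sequentially"
    proof cases
      case 1
      have ev1: "eventually (\<lambda>n. \<forall>i\<in>{1..d n}. \<bar>x n i - (a + real i * (b - a) / real (d n))\<bar> < e/4) sequentially"
      proof -
        have "e/4 > 0 \<longrightarrow> eventually (\<lambda>n. \<forall>i\<in>{1..d n}. \<bar>x n i - (a + real i * (b - a) / real (d n))\<bar> < e/4) sequentially"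
          using assms(1) unfolding asymp_uniform_grid_def by (rule spec)
        thus ?thesis using e by simp
      qed
      have ev2: "eventually (\<lambda>n. \<bar>\<epsilon> n\<bar> < e/4) sequentially" by (rule epsev) (use e in simp)
      have ev3: "eventually (\<lambda>n. Dn n \<le> e / (16*(b-a)) * real (d n)) sequentially"
        by (rule small) (use 1 e in simp)
      have ev4: "eventually (\<lambda>n. Dn n \<le> 1/2 * real (d n)) sequentially"
        by (rule small) simp
      have ev5: "eventually (\<lambda>n. 16*(b-a)/e \<le> real (d n)) sequentially" by (rule dtop)
      from ev1 ev2 ev3 ev4 ev5 show ?thesis
      proof eventually_elim
        case (elim n)
        show ?case
        proof
          fix k assume k: "k \<in> {1..d' n}"
          have D2: "Dn n \<le> real (d n) / 2" using elim(4) by simp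
          show "\<bar>sorted_grid x' d' n k - (a + real k * (b - a) / real (d' n))\<bar> < e"
            by (rule core[where x=x and x'=x' and d=d and d'=d' and n=n and k=k and eps="\<epsilon> n"
                  and a=a and b=b and e=e, OF 1 e elim(1) elim(2) assms(4)[of _ n]
                  elim(3)[unfolded Dn_def] D2[unfolded Dn_def] elim(5) k])
        qed
      qed
    next
      case 2
      have "eventually (\<lambda>n. \<bar>\<epsilon> n\<bar> < e) sequentially" by (rule epsev[OF e])
      thus ?thesis
      proof (rule eventually_mono)
        fix n assume en: "\<bar>\<epsilon> n\<bar> < e"
        show "\<forall>i\<in>{1..d' n}. \<bar>sorted_grid x' d' n i - (a + real i * (b - a) / real (d' n))\<bar> < e"
        proof
          fix k assume k: "k \<in> {1..d' n}"
          obtain j where j: "j \<in> {1..d' n}" "sorted_grid x' d' n k = x' n j"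
            using sorted_grid_mem[of k d' n x'] k by blast
          have "x' n j \<in> {a - \<epsilon> n .. b + \<epsilon> n}" using assms(4)[OF j(1)] .
          thus "\<bar>sorted_grid x' d' n k - (a + real k * (b - a) / real (d' n))\<bar> < e"
            using j(2) en 2 unfolding abs_less_iff by auto
        qed
      qed
    next
      case 3
      have "eventually (\<lambda>n. \<bar>\<epsilon> n\<bar> < (a - b) / 2) sequentially" by (rule epsev) (use 3 in simp)
      thus ?thesis
      proof (rule eventually_mono)
        fix n assume en: "\<bar>\<epsilon> n\<bar> < (a - b) / 2"
        show "\<forall>i\<in>{1..d' n}. \<bar>sorted_grid x' d' n i - (a + real i * (b - a) / real (d' n))\<bar> < e"
        proof
          fix k assume k: "k \<in> {1..d' n}"
          have "x' n k \<in> {a - \<epsilon> n .. b + \<epsilon> n}" using assms(4)[OF k] .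
          hence False using en unfolding abs_less_iff by auto
          thus "\<bar>sorted_grid x' d' n k - (a + real k * (b - a) / real (d' n))\<bar> < e" ..
        qed
      qed
    qed
  qed
  show ?thesis using part1 part2 by blast
qed

end
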